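(* Let $w\in W$ and $\alpha\in\Phi^+\cap w\Phi^-$. The following are equivalent: (1) $w^{-1}\alpha\in-\Pi$; (2) $\alpha$ is a maximal element of $\Phi^+\cap w\Phi^-$ with respect to $\prec_w$; (3) there are no $\beta,\gamma\in\Phi^+\cap w\Phi^-$ with $\alpha=\beta+\gamma$, and there is no $\beta\in\Phi^+\cap w\Phi^-$ with $\alpha\prec\beta$, $(\alpha,\beta)=1$ and $\beta-\alpha\notin\Phi^+\cap w\Phi^-$.
   Context: $\Phi$ is a simply laced root system with positive roots $\Phi^+$, $\Phi^-=-\Phi^+$, simple roots $\Pi$, Weyl group $W$; the scalar product is normalized so that $(\alpha,\alpha)=2$ for all roots. For roots, $\alpha\prec\beta$ means $\beta-\alpha$ is a nonzero sum of positive roots; for $w\in W$, $\alpha\prec_w\beta$ means $w^{-1}\alpha\prec w^{-1}\beta$. *)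

theory Defs
  imports "HOL-Analysis.Analysis"
begin

definition refl_root :: "'a::real_inner \<Rightarrow> 'a \<Rightarrow> 'a" where
  "refl_root a x = x - (2 * (x \<bullet> a) / (a \<bullet> a)) *\<^sub>R a"

definition root_system :: "'a::euclidean_space set \<Rightarrow> bool" where
  "root_system R \<longleftrightarrow> finite R \<and> 0 \<notin> R
     \<and> (\<forall>a\<in>R. \<forall>b\<in>R. refl_root a b \<in> R)
     \<and> (\<forall>a\<in>R. \<forall>b\<in>R. 2 * (b \<bullet> a) / (a \<bullet> a) \<in> \<int>)
     \<and> (\<forall>a\<in>R. \<forall>c::real. c *\<^sub>R a \<in> R \<longrightarrow> c = 1 \<or> c = -1)"

definition simply_laced_root_system :: "'a::euclidean_space set \<Rightarrow> bool" where
  "simply_laced_root_system R \<longleftrightarrow> root_system R \<and> (\<forall>a\<in>R. a \<bullet> a = 2)"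

definition nonneg_int_comb :: "'a::real_vector set \<Rightarrow> 'a set" where
  "nonneg_int_comb P = {x. \<exists>c::'a \<Rightarrow> nat. x = (\<Sum>p\<in>P. real (c p) *\<^sub>R p)}"

definition simple_system :: "'a::euclidean_space set \<Rightarrow> 'a set \<Rightarrow> bool" where
  "simple_system R P \<longleftrightarrow> P \<subseteq> R \<and> independent P
     \<and> (\<forall>a\<in>R. a \<in> nonneg_int_comb P \<or> - a \<in> nonneg_int_comb P)"

definition pos_roots :: "'a::euclidean_space set \<Rightarrow> 'a set \<Rightarrow> 'a set" where
  "pos_roots R P = R \<inter> nonneg_int_comb P"

definition neg_roots :: "'a::euclidean_space set \<Rightarrow> 'a set \<Rightarrow> 'a set" where
  "neg_roots R P = uminus ` pos_roots R P"

inductive_set weyl_group :: "'a::euclidean_space set \<Rightarrow> ('a \<Rightarrow> 'a) set" for R where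
  weyl_id: "id \<in> weyl_group R"
| weyl_step: "a \<in> R \<Longrightarrow> w \<in> weyl_group R \<Longrightarrow> refl_root a \<circ> w \<in> weyl_group R"

definition root_prec :: "'a::euclidean_space set \<Rightarrow> 'a set \<Rightarrow> 'a \<Rightarrow> 'a \<Rightarrow> bool" where
  "root_prec R P a b \<longleftrightarrow>
     b - a \<noteq> 0 \<and> (\<exists>xs. xs \<noteq> [] \<and> set xs \<subseteq> pos_roots R P \<and> b - a = sum_list xs)"

definition root_prec_w :: "'a::euclidean_space set \<Rightarrow> 'a set \<Rightarrow> ('a \<Rightarrow> 'a) \<Rightarrow> 'a \<Rightarrow> 'a \<Rightarrow> bool" where
  "root_prec_w R P w a b \<longleftrightarrow> root_prec R P (inv w a) (inv w b)"

end

theory Submission imports Defs begin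

lemma refl_root_linear: "linear (refl_root a)"
proof -
  have "refl_root a = (\<lambda>x. x - ((2 / (a \<bullet> a)) * (x \<bullet> a)) *\<^sub>R a)"
    unfolding refl_root_def by auto
  moreover have "linear (\<lambda>x. x - ((2 / (a \<bullet> a)) * (x \<bullet> a)) *\<^sub>R a)"
    by (rule linearI) (simp_all add: inner_add_left distrib_left scaleR_add_left scaleR_diff_right mult.left_commute)
  ultimately show ?thesis by simp
qed

lemma refl_root_inner:
  assumes "a \<noteq> 0" shows "refl_root a x \<bullet> refl_root a y = x \<bullet> y"
proof -
  define c where "c = 2 * (x \<bullet> a) / (a \<bullet> a)"
  define d where "d = 2 * (y \<bullet> a) / (a \<bullet> a)"
  have aa: "a \<bullet> a \<noteq> 0" using assms by simp
  have "refl_root a x \<bullet> refl_root a y = (x - c *\<^sub>R a) \<bullet> (y - d *\<^sub>R a)"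
    unfolding refl_root_def c_def d_def by simp
  also have "\<dots> = x \<bullet> y - d * (x \<bullet> a) - c * (a \<bullet> y) + c * d * (a \<bullet> a)"
    by (simp add: inner_diff_left inner_diff_right algebra_simps)
  also have "\<dots> = x \<bullet> y - d * (x \<bullet> a) - c * (y \<bullet> a) + c * d * (a \<bullet> a)"
    by (simp add: inner_commute[of a y])
  also have "\<dots> = x \<bullet> y"
  proof -
    have "- d * (x \<bullet> a) - c * (y \<bullet> a) + c * d * (a \<bullet> a) = 0"
      unfolding c_def d_def using aa by (simp add: field_simps)
    then show ?thesis by linarith
  qed
  finally show ?thesis .
qed

lemma uniq:
  fixes P :: "'a::euclidean_space set"
  assumes "finite P" "independent P" "(\<Sum>p\<in>P. f p *\<^sub>R p) = (\<Sum>p\<in>P. g p *\<^sub>R p)" "q \<in> P"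
  shows "f q = g q"
proof (rule ccontr)
  assume ne: "f q \<noteq> g q"
  have 0: "(\<Sum>p\<in>P. (f p - g p) *\<^sub>R p) = 0"
    using assms(3) by (simp add: scaleR_diff_left sum_subtractf)
  have "dependent P"
    unfolding real_vector.dependent_finite[OF assms(1)]
    apply (rule exI[of _ "\<lambda>p. f p - g p"])
    using 0 ne assms(4) by auto
  then show False using assms(2) by simp
qed
lemma uminus_image_iff: "(m::'b::ab_group_add) \<in> uminus ` S \<longleftrightarrow> - m \<in> S"
proof
  assume "m \<in> uminus ` S" then obtain x where "x \<in> S" "m = - x" by (auto simp: image_iff)
  then show "- m \<in> S" by simp
next
  assume "- m \<in> S" then show "m \<in> uminus ` S" by (intro image_eqI[of _ _ "- m"]) simp_all
qed

lemma weyl_props: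
  assumes "w \<in> weyl_group R" "0 \<notin> R" "\<And>a b. a \<in> R \<Longrightarrow> b \<in> R \<Longrightarrow> refl_root a b \<in> R"
  shows "linear w \<and> (\<forall>x y. w x \<bullet> w y = x \<bullet> y) \<and> (\<forall>r\<in>R. w r \<in> R)"
  using assms(1)
proof (induction rule: weyl_group.induct)
  case weyl_id
  have "linear (id :: 'a \<Rightarrow> 'a)" by (rule linear_id)
  then show ?case by (simp add: id_def)
next
  case (weyl_step a w)
  have an: "a \<noteq> 0" using weyl_step.hyps(1) assms(2) by auto
  have "linear (refl_root a \<circ> w)"
    using weyl_step.IH refl_root_linear linear_compose by blast
  moreover have "\<forall>x y. (refl_root a \<circ> w) x \<bullet> (refl_root a \<circ> w) y = x \<bullet> y"
    using weyl_step.IH refl_root_inner[OF an] by simp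
  moreover have "\<forall>r\<in>R. (refl_root a \<circ> w) r \<in> R"
    using weyl_step.IH assms(3) weyl_step.hyps(1) by simp
  ultimately show ?case by blast
qed

lemma lin_iso_inj:
  assumes "linear w" "\<forall>x y. w x \<bullet> w y = x \<bullet> y"
  shows "inj w"
proof (rule injI)
  fix x y assume "w x = w y"
  then have "w (x - y) = 0" using linear_diff[OF assms(1)] by simp
  then have "(x - y) \<bullet> (x - y) = 0" using assms(2) by (metis inner_zero_left)
  then show "x = y" by simp
qed

context
  fixes R P :: "'a::euclidean_space set"
  assumes SL: "simply_laced_root_system R" and SS: "simple_system R P"
begin

lemma finR: "finite R" using SL unfolding simply_laced_root_system_def root_system_def by simp
lemma zR: "0 \<notin> R" using SL unfolding simply_laced_root_system_def root_system_def by simp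
lemma reflR: "a \<in> R \<Longrightarrow> b \<in> R \<Longrightarrow> refl_root a b \<in> R"
  using SL unfolding simply_laced_root_system_def root_system_def by simp
lemma crys: "a \<in> R \<Longrightarrow> b \<in> R \<Longrightarrow> 2 * (b \<bullet> a) / (a \<bullet> a) \<in> \<int>"
  using SL unfolding simply_laced_root_system_def root_system_def by blast
lemma nrm: "a \<in> R \<Longrightarrow> a \<bullet> a = 2"
  using SL unfolding simply_laced_root_system_def by simp
lemma PR: "P \<subseteq> R" using SS unfolding simple_system_def by simp
lemma indP: "independent P" using SS unfolding simple_system_def by simp
lemma finP: "finite P" using PR finR finite_subset by blast
lemma cls: "a \<in> R \<Longrightarrow> a \<in> nonneg_int_comb P \<or> - a \<in> nonneg_int_comb P"
  using SS unfolding simple_system_def by simp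

lemma refl_eq: "a \<in> R \<Longrightarrow> refl_root a b = b - (b \<bullet> a) *\<^sub>R a"
  by (simp add: refl_root_def nrm)
lemma int_inner: "a \<in> R \<Longrightarrow> b \<in> R \<Longrightarrow> b \<bullet> a \<in> \<int>"
  using crys[of a b] nrm[of a] by simp
lemma negR: "a \<in> R \<Longrightarrow> - a \<in> R"
proof -
  assume a: "a \<in> R"
  have "refl_root a a = a - 2 *\<^sub>R a" using refl_eq[OF a, of a] nrm[OF a] by simp
  also have "\<dots> = - a" by (simp add: scaleR_2)
  finally show ?thesis using reflR[OF a a] by simp
qed
lemma inner_le2: "a \<in> R \<Longrightarrow> b \<in> R \<Longrightarrow> b \<bullet> a \<le> 2"
proof -
  assume a: "a \<in> R" and b: "b \<in> R"
  have "0 \<le> (b - a) \<bullet> (b - a)" by simp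
  also have "(b - a) \<bullet> (b - a) = b \<bullet> b - 2 * (b \<bullet> a) + a \<bullet> a"
    by (simp add: inner_diff_left inner_diff_right inner_commute[of a b])
  finally show ?thesis using nrm[OF a] nrm[OF b] by simp
qed
lemma inner_eq2: "a \<in> R \<Longrightarrow> b \<in> R \<Longrightarrow> b \<bullet> a = 2 \<Longrightarrow> b = a"
proof -
  assume a: "a \<in> R" and b: "b \<in> R" and e: "b \<bullet> a = 2"
  have "(b - a) \<bullet> (b - a) = b \<bullet> b - 2 * (b \<bullet> a) + a \<bullet> a"
    by (simp add: inner_diff_left inner_diff_right inner_commute[of a b])
  also have "\<dots> = 0" using nrm[OF a] nrm[OF b] e by simp
  finally show ?thesis by simp
qed

lemma nn0: "0 \<in> nonneg_int_comb P"
  unfolding nonneg_int_comb_def by (rule CollectI, rule exI[of _ "\<lambda>_. 0"]) simp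
lemma nn_add: "x \<in> nonneg_int_comb P \<Longrightarrow> y \<in> nonneg_int_comb P \<Longrightarrow> x + y \<in> nonneg_int_comb P"
proof -
  assume "x \<in> nonneg_int_comb P" "y \<in> nonneg_int_comb P"
  then obtain c d where c: "x = (\<Sum>p\<in>P. real (c p) *\<^sub>R p)" and d: "y = (\<Sum>p\<in>P. real (d p) *\<^sub>R p)"
    unfolding nonneg_int_comb_def by blast
  have "x + y = (\<Sum>p\<in>P. real (c p + d p) *\<^sub>R p)"
    unfolding c d by (simp add: sum.distrib scaleR_add_left)
  then show ?thesis unfolding nonneg_int_comb_def by (intro CollectI exI[of _ "\<lambda>p. c p + d p"])
qed
lemma pos_nn: "x \<in> pos_roots R P \<Longrightarrow> x \<in> nonneg_int_comb P"
  unfolding pos_roots_def by simp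
lemma pos_R: "x \<in> pos_roots R P \<Longrightarrow> x \<in> R"
  unfolding pos_roots_def by simp
lemma nn_sumlist: "set xs \<subseteq> pos_roots R P \<Longrightarrow> sum_list xs \<in> nonneg_int_comb P"
  by (induction xs) (auto intro: nn0 nn_add pos_nn)
lemma delta_sum: "q \<in> P \<Longrightarrow> (\<Sum>p\<in>P. real (if p = q then 1 else 0) *\<^sub>R p) = q"
proof -
  assume q: "q \<in> P"
  have "(\<Sum>p\<in>P. real (if p = q then 1 else 0) *\<^sub>R p) = (\<Sum>p\<in>P. if p = q then p else 0)"
    by (rule sum.cong) auto
  also have "\<dots> = q" using sum.delta[OF finP, of q "\<lambda>p. p"] q by simp
  finally show ?thesis .
qed
lemma P_pos: "q \<in> P \<Longrightarrow> q \<in> pos_roots R P"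
proof -
  assume q: "q \<in> P"
  have "q \<in> nonneg_int_comb P" unfolding nonneg_int_comb_def
    using delta_sum[OF q] by (intro CollectI exI[of _ "\<lambda>p. if p = q then 1 else 0"]) simp
  then show ?thesis unfolding pos_roots_def using q PR by auto
qed
lemma neg_iff: "m \<in> neg_roots R P \<longleftrightarrow> - m \<in> pos_roots R P"
  unfolding neg_roots_def by (rule uminus_image_iff)
lemma root_cases: "r \<in> R \<Longrightarrow> r \<in> pos_roots R P \<or> - r \<in> pos_roots R P"
  using cls[of r] negR[of r] unfolding pos_roots_def by auto
lemma pos_neg_disj:
  assumes a: "a \<in> pos_roots R P" and na: "- a \<in> pos_roots R P" shows False
proof -
  obtain c where c: "a = (\<Sum>p\<in>P. real (c p) *\<^sub>R p)" using a unfolding pos_roots_def nonneg_int_comb_def by blast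
  obtain d where d: "- a = (\<Sum>p\<in>P. real (d p) *\<^sub>R p)" using na unfolding pos_roots_def nonneg_int_comb_def by blast
  have e: "(\<Sum>p\<in>P. real (c p + d p) *\<^sub>R p) = (\<Sum>p\<in>P. (0::real) *\<^sub>R p)"
  proof -
    have "(\<Sum>p\<in>P. real (c p + d p) *\<^sub>R p) = (\<Sum>p\<in>P. real (c p) *\<^sub>R p) + (\<Sum>p\<in>P. real (d p) *\<^sub>R p)"
      by (simp add: sum.distrib scaleR_add_left)
    also have "\<dots> = a + - a" using c d by simp
    finally show ?thesis by simp
  qed
  have "\<forall>q\<in>P. c q = 0"
  proof
    fix q assume "q \<in> P"
    from uniq[OF finP indP e this] have "real (c q + d q) = 0" by simp
    then show "c q = 0" by simp
  qed
  then have "a = (\<Sum>p\<in>P. (0::real) *\<^sub>R p)" unfolding c by (intro sum.cong) auto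
  then have "a = 0" by simp
  then show False using a pos_R zR by blast
qed

lemma K0:
  assumes u: "u \<in> pos_roots R P" and q: "q \<in> P" and d: "q - u \<in> nonneg_int_comb P"
  shows "u = q"
proof -
  obtain c where c: "u = (\<Sum>p\<in>P. real (c p) *\<^sub>R p)" using u unfolding pos_roots_def nonneg_int_comb_def by blast
  obtain d where d: "q - u = (\<Sum>p\<in>P. real (d p) *\<^sub>R p)" using d unfolding nonneg_int_comb_def by blast
  have e: "(\<Sum>p\<in>P. real (c p + d p) *\<^sub>R p) = (\<Sum>p\<in>P. real (if p = q then 1 else 0) *\<^sub>R p)"
  proof -
    have "(\<Sum>p\<in>P. real (c p + d p) *\<^sub>R p) = (\<Sum>p\<in>P. real (c p) *\<^sub>R p) + (\<Sum>p\<in>P. real (d p) *\<^sub>R p)"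
      by (simp add: sum.distrib scaleR_add_left)
    also have "\<dots> = u + (q - u)" using c d by simp
    finally show ?thesis using delta_sum[OF q] by simp
  qed
  have cd: "\<And>p. p \<in> P \<Longrightarrow> c p + d p = (if p = q then 1 else 0)"
  proof -
    fix p assume "p \<in> P"
    from uniq[OF finP indP e this] show "c p + d p = (if p = q then 1 else 0)"
      by (simp only: of_nat_eq_iff)
  qed
  have "u = (\<Sum>p\<in>P. if p = q then real (c q) *\<^sub>R p else 0)"
    unfolding c
  proof (rule sum.cong)
    fix p assume "p \<in> P" then show "real (c p) *\<^sub>R p = (if p = q then real (c q) *\<^sub>R p else 0)"
      using cd[of p] by (cases "p = q") auto
  qed simp
  also have "\<dots> = real (c q) *\<^sub>R q" using sum.delta[OF finP, of q "\<lambda>p. real (c q) *\<^sub>R p"] q by simp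
  finally have uq: "u = real (c q) *\<^sub>R q" .
  have "c q \<le> 1" using cd[OF q] by simp
  moreover have "c q \<noteq> 0"
  proof
    assume "c q = 0" then have "u = 0" using uq by simp
    then show False using u pos_R zR by blast
  qed
  ultimately have "c q = 1" by simp
  then show ?thesis using uq by simp
qed

lemma K4:
  assumes th: "t \<in> pos_roots R P" and nP: "t \<notin> P"
  shows "\<exists>q\<in>P. t - q \<in> pos_roots R P \<and> t \<bullet> q = 1"
proof -
  obtain c where c: "t = (\<Sum>p\<in>P. real (c p) *\<^sub>R p)" using th unfolding pos_roots_def nonneg_int_comb_def by blast
  have tR: "t \<in> R" using th pos_R by blast
  have "t \<bullet> t = (\<Sum>p\<in>P. real (c p) * (t \<bullet> p))"
    by (subst (2) c) (simp add: inner_sum_right)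
  then have s2: "(\<Sum>p\<in>P. real (c p) * (t \<bullet> p)) = 2" using nrm[OF tR] by simp
  obtain q where q: "q \<in> P" "t \<bullet> q > 0"
  proof (rule ccontr)
    assume "\<not> thesis"
    then have "\<forall>q\<in>P. t \<bullet> q \<le> 0" using that by force
    then have "(\<Sum>p\<in>P. real (c p) * (t \<bullet> p)) \<le> 0"
      by (intro sum_nonpos) (simp add: mult_nonneg_nonpos)
    then show False using s2 by simp
  qed
  have qR: "q \<in> R" using q(1) PR by blast
  have "t \<bullet> q \<in> \<int>" using int_inner[OF qR tR] .
  then obtain k where k: "t \<bullet> q = of_int k" by (elim Ints_cases)
  have "t \<bullet> q \<le> 2" using inner_le2[OF qR tR] .
  moreover have "t \<bullet> q \<noteq> 2" using inner_eq2[OF qR tR] q(1) nP by blast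
  ultimately have "k > 0" "k \<le> 2" "k \<noteq> 2" using k q(2) by simp_all
  then have "k = 1" by simp
  then have tq: "t \<bullet> q = 1" using k by simp
  have "refl_root q t = t - q" using refl_eq[OF qR, of t] tq by simp
  then have tqR: "t - q \<in> R" using reflR[OF qR tR] by simp
  have "t - q \<in> pos_roots R P"
  proof (rule ccontr)
    assume "t - q \<notin> pos_roots R P"
    then have "- (t - q) \<in> pos_roots R P" using root_cases[OF tqR] by blast
    then have "q - t \<in> nonneg_int_comb P" using pos_nn by simp
    then have "t = q" using K0[OF th q(1)] by simp
    then show False using q(1) nP by simp
  qed
  then show ?thesis using q(1) tq by blast
qed

lemma main_ctx:
  assumes W: "w \<in> weyl_group R" and A: "\<alpha> \<in> pos_roots R P \<inter> w ` neg_roots R P"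
  shows "(inv w \<alpha> \<in> uminus ` P
            \<longleftrightarrow> \<not> (\<exists>\<beta>\<in>pos_roots R P \<inter> w ` neg_roots R P. root_prec R P (inv w \<alpha>) (inv w \<beta>)))
       \<and> (\<not> (\<exists>\<beta>\<in>pos_roots R P \<inter> w ` neg_roots R P. root_prec R P (inv w \<alpha>) (inv w \<beta>))
            \<longleftrightarrow> (\<not> (\<exists>\<beta>\<in>pos_roots R P \<inter> w ` neg_roots R P. \<exists>\<gamma>\<in>pos_roots R P \<inter> w ` neg_roots R P. \<alpha> = \<beta> + \<gamma>)
                 \<and> \<not> (\<exists>\<beta>\<in>pos_roots R P \<inter> w ` neg_roots R P. root_prec R P \<alpha> \<beta> \<and> \<alpha> \<bullet> \<beta> = 1
                       \<and> \<beta> - \<alpha> \<notin> pos_roots R P \<inter> w ` neg_roots R P)))"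
proof -
  let ?pos = "pos_roots R P"
  let ?N = "pos_roots R P \<inter> w ` neg_roots R P"
  have wp: "linear w" "\<And>x y. w x \<bullet> w y = x \<bullet> y" "\<And>r. r \<in> R \<Longrightarrow> w r \<in> R"
    using weyl_props[OF W zR reflR] by auto
  have inj: "inj w" using lin_iso_inj wp(1,2) by blast
  have iw: "\<And>x. inv w (w x) = x" using inj by (simp add: inv_f_f)
  have weq: "\<And>x y. w x = w y \<Longrightarrow> x = y" using inj by (simp add: inj_eq)
  have wadd: "\<And>x y. w (x + y) = w x + w y" using linear_add[OF wp(1)] .
  have wneg: "\<And>x. w (- x) = - w x" using linear_neg[OF wp(1)] .
  have wdiff: "\<And>x y. w (x - y) = w x - w y" using linear_diff[OF wp(1)] .
  have wN: "\<And>m. w m \<in> ?pos \<Longrightarrow> - m \<in> ?pos \<Longrightarrow> w m \<in> ?N"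
  proof -
    fix m assume h1: "w m \<in> ?pos" and h2: "- m \<in> ?pos"
    have "m \<in> neg_roots R P" using h2 neg_iff by simp
    then have "w m \<in> w ` neg_roots R P" by (rule imageI)
    then show "w m \<in> ?N" using h1 by (rule IntI[rotated])
  qed
  have invN: "\<And>\<beta>. \<beta> \<in> ?N \<Longrightarrow> \<exists>m. - m \<in> ?pos \<and> \<beta> = w m \<and> inv w \<beta> = m"
  proof -
    fix \<beta> assume "\<beta> \<in> ?N"
    then have "\<beta> \<in> w ` neg_roots R P" by (rule IntD2)
    then obtain m where m: "m \<in> neg_roots R P" "\<beta> = w m" by (rule imageE)
    have "- m \<in> ?pos" using m(1) neg_iff by simp
    then show "\<exists>m. - m \<in> ?pos \<and> \<beta> = w m \<and> inv w \<beta> = m" using m(2) iw by (intro exI[of _ m]) simp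
  qed
  obtain n where n: "- n \<in> ?pos" "\<alpha> = w n" using invN[OF A] by (elim exE conjE)
  define t where "t = - n"
  have tpos: "t \<in> ?pos" using n(1) t_def by simp
  have nt: "n = - t" using t_def by simp
  have tR: "t \<in> R" using tpos pos_R by blast
  have nR: "n \<in> R" using negR[OF tR] nt by simp
  have ia: "inv w \<alpha> = n" using iw n(2) by simp
  have apos: "\<alpha> \<in> ?pos" using A by blast
  have aR: "\<alpha> \<in> R" using apos pos_R by blast
  have c1: "inv w \<alpha> \<in> uminus ` P \<longleftrightarrow> t \<in> P" using ia t_def uminus_image_iff[of "inv w \<alpha>" P] by simp
  have rp_nn: "\<And>a b. root_prec R P a b \<Longrightarrow> b - a \<noteq> 0 \<and> b - a \<in> nonneg_int_comb P"
    unfolding root_prec_def using nn_sumlist by auto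
  have rp_intro: "\<And>a b. b - a \<in> ?pos \<Longrightarrow> root_prec R P a b"
  proof -
    fix a b assume h: "b - a \<in> ?pos"
    have "b - a \<noteq> 0" using h pos_R zR by metis
    then show "root_prec R P a b" unfolding root_prec_def
      by (intro conjI exI[of _ "[b - a]"]) (use h in auto)
  qed

  have C12: "t \<in> P \<longleftrightarrow> \<not> (\<exists>\<beta>\<in>?N. root_prec R P n (inv w \<beta>))"
  proof
    assume tP: "t \<in> P"
    show "\<not> (\<exists>\<beta>\<in>?N. root_prec R P n (inv w \<beta>))"
    proof
      assume "\<exists>\<beta>\<in>?N. root_prec R P n (inv w \<beta>)"
      then obtain \<beta> where \<beta>: "\<beta> \<in> ?N" "root_prec R P n (inv w \<beta>)" by blast
      obtain m where m: "- m \<in> ?pos" "\<beta> = w m" "inv w \<beta> = m" using invN[OF \<beta>(1)] by blast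
      have rp: "m - n \<noteq> 0" "m - n \<in> nonneg_int_comb P" using rp_nn[OF \<beta>(2)] m(3) by auto
      have "t - (- m) = m - n" using nt by simp
      then have "- m = t" using K0[OF m(1) tP] rp(2) by simp
      then have "m = - t" by (metis minus_minus)
      then have "m - n = 0" using nt by simp
      then show False using rp(1) by simp
    qed
  next
    assume H: "\<not> (\<exists>\<beta>\<in>?N. root_prec R P n (inv w \<beta>))"
    show "t \<in> P"
    proof (rule ccontr)
      assume tnP: "t \<notin> P"
      obtain q where q: "q \<in> P" "t - q \<in> ?pos" "t \<bullet> q = 1" using K4[OF tpos tnP] by blast
      have qpos: "q \<in> ?pos" using P_pos q(1) by blast
      have qR: "q \<in> R" using q(1) PR by blast
      have tqR: "t - q \<in> R" using q(2) pos_R by blast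
      show False
      proof (cases "w (- q) \<in> ?pos")
        case True
        have "w (- q) \<in> ?N" using wN[OF True] qpos by simp
        moreover have "root_prec R P n (inv w (w (- q)))"
          unfolding iw using rp_intro[of "- q" n] q(2) nt by simp
        ultimately show False using H by blast
      next
        case False
        have "w (- q) \<in> R" using wp(3) negR qR by blast
        then have "- w (- q) \<in> ?pos" using root_cases False by blast
        then have wq: "w q \<in> ?pos" using wneg by simp
        have e1: "n + q = - (t - q)" using nt by simp
        have \<beta>e: "w (n + q) = \<alpha> + w q" using wadd n(2) by simp
        have \<beta>R: "w (n + q) \<in> R" using wp(3) negR[OF tqR] e1 by simp
        have "w (n + q) \<in> nonneg_int_comb P" using \<beta>e nn_add pos_nn apos wq by simp
        then have \<beta>pos: "w (n + q) \<in> ?pos" unfolding pos_roots_def using \<beta>R by simp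
        have "w (n + q) \<in> ?N" using wN[OF \<beta>pos] e1 q(2) by simp
        moreover have "root_prec R P n (inv w (w (n + q)))"
          unfolding iw using rp_intro[of "n + q" n] qpos by simp
        ultimately show False using H by blast
      qed
    qed
  qed

  have C13: "t \<in> P \<longleftrightarrow> (\<not> (\<exists>\<beta>\<in>?N. \<exists>\<gamma>\<in>?N. \<alpha> = \<beta> + \<gamma>)
                 \<and> \<not> (\<exists>\<beta>\<in>?N. root_prec R P \<alpha> \<beta> \<and> \<alpha> \<bullet> \<beta> = 1 \<and> \<beta> - \<alpha> \<notin> ?N))"
  proof
    assume tP: "t \<in> P"
    have A3: "\<not> (\<exists>\<beta>\<in>?N. \<exists>\<gamma>\<in>?N. \<alpha> = \<beta> + \<gamma>)"
    proof
      assume "\<exists>\<beta>\<in>?N. \<exists>\<gamma>\<in>?N. \<alpha> = \<beta> + \<gamma>"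
      then obtain \<beta> \<gamma> where bg: "\<beta> \<in> ?N" "\<gamma> \<in> ?N" "\<alpha> = \<beta> + \<gamma>" by blast
      obtain m1 where m1: "- m1 \<in> ?pos" "\<beta> = w m1" using invN[OF bg(1)] by blast
      obtain m2 where m2: "- m2 \<in> ?pos" "\<gamma> = w m2" using invN[OF bg(2)] by blast
      have "w n = w (m1 + m2)" using wadd n(2) bg(3) m1(2) m2(2) by simp
      then have "n = m1 + m2" by (rule weq)
      then have tm: "t = - (m1 + m2)" using nt by (metis minus_minus)
      then have "t - (- m1) = - m2" by simp
      then have "- m1 = t" using K0[OF m1(1) tP] pos_nn[OF m2(1)] by simp
      then have "- m2 = 0" using tm by simp
      then show False using m2(1) pos_R zR by metis
    qed
    have B3: "\<not> (\<exists>\<beta>\<in>?N. root_prec R P \<alpha> \<beta> \<and> \<alpha> \<bullet> \<beta> = 1 \<and> \<beta> - \<alpha> \<notin> ?N)"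
    proof
      assume "\<exists>\<beta>\<in>?N. root_prec R P \<alpha> \<beta> \<and> \<alpha> \<bullet> \<beta> = 1 \<and> \<beta> - \<alpha> \<notin> ?N"
      then obtain \<beta> where \<beta>: "\<beta> \<in> ?N" "root_prec R P \<alpha> \<beta>" "\<alpha> \<bullet> \<beta> = 1" "\<beta> - \<alpha> \<notin> ?N" by blast
      obtain m where m: "- m \<in> ?pos" "\<beta> = w m" using invN[OF \<beta>(1)] by blast
      have \<beta>R: "\<beta> \<in> R" using \<beta>(1) pos_R by blast
      have \<gamma>nn: "\<beta> - \<alpha> \<in> nonneg_int_comb P" using rp_nn[OF \<beta>(2)] by blast
      have "refl_root \<alpha> \<beta> = \<beta> - \<alpha>" using refl_eq[OF aR, of \<beta>] \<beta>(3) by (simp add: inner_commute)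
      then have \<gamma>R: "\<beta> - \<alpha> \<in> R" using reflR[OF aR \<beta>R] by simp
      have \<gamma>pos: "\<beta> - \<alpha> \<in> ?pos" unfolding pos_roots_def using \<gamma>nn \<gamma>R by simp
      have \<gamma>w: "\<beta> - \<alpha> = w (m - n)" using wdiff m(2) n(2) by simp
      have nmn: "- (m - n) \<notin> ?pos"
      proof
        assume "- (m - n) \<in> ?pos"
        then have "\<beta> - \<alpha> \<in> ?N" using wN \<gamma>pos \<gamma>w by metis
        then show False using \<beta>(4) by simp
      qed
      have mR: "m \<in> R" using negR[OF pos_R[OF m(1)]] by simp
      have "m \<bullet> n = 1" using wp(2)[of m n] m(2) n(2) \<beta>(3) by (simp add: inner_commute)
      then have "refl_root n m = m - n" using refl_eq[OF nR, of m] by simp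
      then have "m - n \<in> R" using reflR[OF nR mR] by simp
      then have mnpos: "m - n \<in> ?pos" using root_cases nmn by blast
      have "t - (m - n) = - m" using nt by simp
      then have "t - (m - n) \<in> nonneg_int_comb P" using pos_nn[OF m(1)] by (simp only:)
      then have "m - n = t" using K0[OF mnpos tP] by simp
      then have "m = 0" using nt by simp
      then show False using mR zR by simp
    qed
    show "\<not> (\<exists>\<beta>\<in>?N. \<exists>\<gamma>\<in>?N. \<alpha> = \<beta> + \<gamma>)
                 \<and> \<not> (\<exists>\<beta>\<in>?N. root_prec R P \<alpha> \<beta> \<and> \<alpha> \<bullet> \<beta> = 1 \<and> \<beta> - \<alpha> \<notin> ?N)"
      using A3 B3 by blast
  next
    assume H: "\<not> (\<exists>\<beta>\<in>?N. \<exists>\<gamma>\<in>?N. \<alpha> = \<beta> + \<gamma>)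
                 \<and> \<not> (\<exists>\<beta>\<in>?N. root_prec R P \<alpha> \<beta> \<and> \<alpha> \<bullet> \<beta> = 1 \<and> \<beta> - \<alpha> \<notin> ?N)"
    show "t \<in> P"
    proof (rule ccontr)
      assume tnP: "t \<notin> P"
      obtain q where q: "q \<in> P" "t - q \<in> ?pos" "t \<bullet> q = 1" using K4[OF tpos tnP] by blast
      have qpos: "q \<in> ?pos" using P_pos q(1) by blast
      have qR: "q \<in> R" using q(1) PR by blast
      have tqR: "t - q \<in> R" using q(2) pos_R by blast
      have e1: "n + q = - (t - q)" using nt by simp
      have \<gamma>R: "w (n + q) \<in> R" using wp(3) negR[OF tqR] e1 by simp
      have nq: "n \<bullet> q = - 1" using nt q(3) by simp
      show False
      proof (cases "w (- q) \<in> ?pos")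
        case True
        have \<beta>N: "w (- q) \<in> ?N" using wN[OF True] qpos by simp
        have sum: "\<alpha> = w (- q) + w (n + q)" using n(2) wadd[of "- q" "n + q"] by simp
        show False
        proof (cases "w (n + q) \<in> ?pos")
          case True
          have "w (n + q) \<in> ?N" using wN[OF True] e1 q(2) by simp
          then show False using H \<beta>N sum by blast
        next
          case False
          have d: "- w (n + q) \<in> ?pos" using root_cases[OF \<gamma>R] False by blast
          have e: "w (- q) - \<alpha> = - w (n + q)" using sum by simp
          have r1: "root_prec R P \<alpha> (w (- q))" using rp_intro d e by simp
          have r2: "\<alpha> \<bullet> w (- q) = 1" using wp(2)[of n "- q"] n(2) nq by simp
          have r3: "w (- q) - \<alpha> \<notin> ?N"
          proof
            assume "w (- q) - \<alpha> \<in> ?N"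
            then obtain m' where m': "- m' \<in> ?pos" "w (- q) - \<alpha> = w m'" using invN by blast
            have "- (n + q) = t - q" using nt by simp
            then have wtq: "w (t - q) = - w (n + q)" using wneg[of "n + q"] by simp
            have "w m' = w (t - q)" using m'(2) e wtq by simp
            then have "m' = t - q" by (rule weq)
            then show False using m'(1) q(2) pos_neg_disj by blast
          qed
          show False using H \<beta>N r1 r2 r3 by blast
        qed
      next
        case False
        have "w (- q) \<in> R" using wp(3) negR qR by blast
        then have "- w (- q) \<in> ?pos" using root_cases False by blast
        then have wq: "w q \<in> ?pos" using wneg by simp
        have \<beta>e: "w (n + q) = \<alpha> + w q" using wadd n(2) by simp
        have "w (n + q) \<in> nonneg_int_comb P" using \<beta>e nn_add pos_nn apos wq by simp
        then have \<beta>pos: "w (n + q) \<in> ?pos" unfolding pos_roots_def using \<gamma>R by simp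
        have \<beta>N: "w (n + q) \<in> ?N" using wN[OF \<beta>pos] e1 q(2) by simp
        have r1: "root_prec R P \<alpha> (w (n + q))" using rp_intro \<beta>e wq by simp
        have "n \<bullet> (n + q) = n \<bullet> n + n \<bullet> q" by (simp add: inner_add_right)
        then have "n \<bullet> (n + q) = 1" using nrm[OF nR] nq by simp
        then have r2: "\<alpha> \<bullet> w (n + q) = 1" using wp(2)[of n "n + q"] n(2) by simp
        have r3: "w (n + q) - \<alpha> \<notin> ?N"
        proof
          assume "w (n + q) - \<alpha> \<in> ?N"
          then obtain m' where m': "- m' \<in> ?pos" "w (n + q) - \<alpha> = w m'" using invN by blast
          have "w m' = w q" using m'(2) \<beta>e by simp
          then have "m' = q" by (rule weq)
          then show False using m'(1) qpos pos_neg_disj by blast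
        qed
        show False using H \<beta>N r1 r2 r3 by blast
      qed
    qed
  qed
  show ?thesis using c1 C12 C13 ia by blast
qed

end

theorem mainTheorem16:
  fixes R P :: "'a::euclidean_space set" and w :: "'a \<Rightarrow> 'a" and \<alpha> :: 'a
  assumes "simply_laced_root_system R"
    and "simple_system R P"
    and "w \<in> weyl_group R"
    and "\<alpha> \<in> pos_roots R P \<inter> w ` neg_roots R P"
  defines "N \<equiv> pos_roots R P \<inter> w ` neg_roots R P"
  shows "(inv w \<alpha> \<in> uminus ` P
            \<longleftrightarrow> \<not> (\<exists>\<beta>\<in>N. root_prec_w R P w \<alpha> \<beta>))
       \<and> (\<not> (\<exists>\<beta>\<in>N. root_prec_w R P w \<alpha> \<beta>)
            \<longleftrightarrow> (\<not> (\<exists>\<beta>\<in>N. \<exists>\<gamma>\<in>N. \<alpha> = \<beta> + \<gamma>)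
                 \<and> \<not> (\<exists>\<beta>\<in>N. root_prec R P \<alpha> \<beta> \<and> \<alpha> \<bullet> \<beta> = 1 \<and> \<beta> - \<alpha> \<notin> N)))"
  unfolding N_def root_prec_w_def
  by (rule main_ctx[OF assms(1,2,3,4)])

end
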